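(* Suppose $f:\overline{\mathcal{G}}\to\mathbb{R}$ is harmonic and $c$ is a regular value of $f$. Assume there is no $x\in\partial\overline{\mathcal{G}}$ with $f(x)=c$. Then $f^{-1}(c)$ is a finite set.
   Context: $\mathcal{G}$ is a connected, locally finite metric graph with countable vertex set and countable edge set. Each edge has a positive length and is identified with an interval. $\mathcal{G}$ carries the geodesic distance, and $\overline{\mathcal{G}}$ is its metric completion. A designated set of vertices, containing all vertices of degree $1$, forms the boundary vertices. $\mathcal{G}_{int}$ is $\mathcal{G}$ minus the boundary vertices, and $\partial\overline{\mathcal{G}}=\overline{\mathcal{G}}\setminus\mathcal{G}_{int}$. Standing assumptions: $\overline{\mathcal{G}}$ is compact and $\partial\overline{\mathcal{G}}$ is totally disconnected. A function $f:\overline{\mathcal{G}}\to\mathbb{R}$ is harmonic if it is continuous, linear on each edge, and satisfies $\sum_{e\sim v}\partial_\nu f_e(v)=0$ at every interior vertex $v$, where $\partial_\nu f_e(v)$ is the derivative of $f_e$ at $v$ in the direction from $v$ into the edge $e$. A point $x\in\mathcal{G}$ is a critical point of $f$ if $x$ is a vertex or $f'(x)=0$. A number is a critical value if its preimage contains a critical point. Values in the range of $f$ that are not critical values are regular values. *)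

theory Defs
  imports "HOL-Analysis.Analysis"
begin

text \<open>Points of the (uncompleted) metric graph: a vertex, or an interior point of an edge e
  at arclength parameter t (measured from the source of e), with 0 < t < len e.\<close>
datatype ('v,'e) gpt = Vtx 'v | Ept 'e real

definition pos :: "('e \<Rightarrow> 'v) \<Rightarrow> ('e \<Rightarrow> 'v) \<Rightarrow> ('e \<Rightarrow> real) \<Rightarrow> 'e \<Rightarrow> real \<Rightarrow> ('v,'e) gpt" where
  "pos src tgt len e t = (if t \<le> 0 then Vtx (src e) else if t \<ge> len e then Vtx (tgt e) else Ept e t)"

definition gpoints :: "'v set \<Rightarrow> 'e set \<Rightarrow> ('e \<Rightarrow> real) \<Rightarrow> ('v,'e) gpt set" where
  "gpoints V E len = Vtx ` V \<union> {Ept e t | e t. e \<in> E \<and> 0 < t \<and> t < len e}"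

definition degree :: "'e set \<Rightarrow> ('e \<Rightarrow> 'v) \<Rightarrow> ('e \<Rightarrow> 'v) \<Rightarrow> 'v \<Rightarrow> nat" where
  "degree E src tgt v = card {e\<in>E. src e = v} + card {e\<in>E. tgt e = v}"

definition metric_graph :: "'v set \<Rightarrow> 'e set \<Rightarrow> ('e \<Rightarrow> 'v) \<Rightarrow> ('e \<Rightarrow> 'v) \<Rightarrow> ('e \<Rightarrow> real) \<Rightarrow> bool" where
  "metric_graph V E src tgt len \<longleftrightarrow>
     countable V \<and> countable E \<and>
     (\<forall>e\<in>E. src e \<in> V \<and> tgt e \<in> V \<and> len e > 0) \<and>
     (\<forall>v\<in>V. finite {e\<in>E. src e = v \<or> tgt e = v}) \<and>
     (\<forall>u\<in>V. \<forall>w\<in>V. (u, w) \<in> ({(src e, tgt e) | e. e \<in> E} \<union> {(tgt e, src e) | e. e \<in> E})\<^sup>*)"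

definition edge_step :: "'e set \<Rightarrow> ('e \<Rightarrow> 'v) \<Rightarrow> ('e \<Rightarrow> 'v) \<Rightarrow> ('e \<Rightarrow> real)
    \<Rightarrow> ('v,'e) gpt \<Rightarrow> ('v,'e) gpt \<Rightarrow> real \<Rightarrow> bool" where
  "edge_step E src tgt len x y d \<longleftrightarrow>
     (\<exists>e\<in>E. \<exists>s t. 0 \<le> s \<and> s \<le> len e \<and> 0 \<le> t \<and> t \<le> len e \<and>
        pos src tgt len e s = x \<and> pos src tgt len e t = y \<and> d = \<bar>s - t\<bar>)"

inductive chain_len :: "'e set \<Rightarrow> ('e \<Rightarrow> 'v) \<Rightarrow> ('e \<Rightarrow> 'v) \<Rightarrow> ('e \<Rightarrow> real)
    \<Rightarrow> ('v,'e) gpt \<Rightarrow> ('v,'e) gpt \<Rightarrow> real \<Rightarrow> bool"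
  for E src tgt len where
  refl: "chain_len E src tgt len x x 0"
| step: "edge_step E src tgt len x y d1 \<Longrightarrow> chain_len E src tgt len y z d2
          \<Longrightarrow> chain_len E src tgt len x z (d1 + d2)"

definition gdist :: "'e set \<Rightarrow> ('e \<Rightarrow> 'v) \<Rightarrow> ('e \<Rightarrow> 'v) \<Rightarrow> ('e \<Rightarrow> real)
    \<Rightarrow> ('v,'e) gpt \<Rightarrow> ('v,'e) gpt \<Rightarrow> real" where
  "gdist E src tgt len x y = Inf {d. chain_len E src tgt len x y d}"

definition is_completion :: "'v set \<Rightarrow> 'e set \<Rightarrow> ('e \<Rightarrow> 'v) \<Rightarrow> ('e \<Rightarrow> 'v) \<Rightarrow> ('e \<Rightarrow> real)
    \<Rightarrow> (('v,'e) gpt \<Rightarrow> 'p::metric_space) \<Rightarrow> 'p set \<Rightarrow> bool" where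
  "is_completion V E src tgt len emb Gbar \<longleftrightarrow>
     emb ` gpoints V E len \<subseteq> Gbar \<and>
     (\<forall>x\<in>gpoints V E len. \<forall>y\<in>gpoints V E len. dist (emb x) (emb y) = gdist E src tgt len x y) \<and>
     Gbar \<subseteq> closure (emb ` gpoints V E len) \<and>
     complete Gbar"

text \<open>The boundary of the completion: Gbar minus the interior part G_int (G without boundary vertices B).\<close>
definition bdry :: "'v set \<Rightarrow> 'e set \<Rightarrow> ('e \<Rightarrow> real) \<Rightarrow> 'v set
    \<Rightarrow> (('v,'e) gpt \<Rightarrow> 'p) \<Rightarrow> 'p set \<Rightarrow> 'p set" where
  "bdry V E len B emb Gbar = Gbar - emb ` (gpoints V E len - Vtx ` B)"

definition totally_disconnected :: "'a::topological_space set \<Rightarrow> bool" where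
  "totally_disconnected S \<longleftrightarrow> (\<forall>T\<subseteq>S. connected T \<longrightarrow> (\<exists>a. T \<subseteq> {a}))"

definition slope :: "('e \<Rightarrow> 'v) \<Rightarrow> ('e \<Rightarrow> 'v) \<Rightarrow> ('e \<Rightarrow> real) \<Rightarrow> (('v,'e) gpt \<Rightarrow> 'p)
    \<Rightarrow> ('p \<Rightarrow> real) \<Rightarrow> 'e \<Rightarrow> real" where
  "slope src tgt len emb f e =
     (f (emb (pos src tgt len e (len e))) - f (emb (pos src tgt len e 0))) / len e"

text \<open>Harmonic: continuous on Gbar, linear on each edge, Kirchhoff condition at interior vertices.
  The outward derivative into e at v is slope e if v is the source of e and - slope e if v is the target.\<close>
definition harmonic :: "'v set \<Rightarrow> 'e set \<Rightarrow> ('e \<Rightarrow> 'v) \<Rightarrow> ('e \<Rightarrow> 'v) \<Rightarrow> ('e \<Rightarrow> real) \<Rightarrow> 'v set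
    \<Rightarrow> (('v,'e) gpt \<Rightarrow> 'p::topological_space) \<Rightarrow> 'p set \<Rightarrow> ('p \<Rightarrow> real) \<Rightarrow> bool" where
  "harmonic V E src tgt len B emb Gbar f \<longleftrightarrow>
     continuous_on Gbar f \<and>
     (\<forall>e\<in>E. \<exists>a b. \<forall>t\<in>{0..len e}. f (emb (pos src tgt len e t)) = a + b * t) \<and>
     (\<forall>v\<in>V - B. (\<Sum>e\<in>{e\<in>E. src e = v}. slope src tgt len emb f e)
                 - (\<Sum>e\<in>{e\<in>E. tgt e = v}. slope src tgt len emb f e) = 0)"

definition critical_point :: "('e \<Rightarrow> 'v) \<Rightarrow> ('e \<Rightarrow> 'v) \<Rightarrow> ('e \<Rightarrow> real) \<Rightarrow> (('v,'e) gpt \<Rightarrow> 'p)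
    \<Rightarrow> ('p \<Rightarrow> real) \<Rightarrow> ('v,'e) gpt \<Rightarrow> bool" where
  "critical_point src tgt len emb f x \<longleftrightarrow>
     (case x of Vtx v \<Rightarrow> True | Ept e t \<Rightarrow> slope src tgt len emb f e = 0)"

definition critical_value :: "'v set \<Rightarrow> 'e set \<Rightarrow> ('e \<Rightarrow> 'v) \<Rightarrow> ('e \<Rightarrow> 'v) \<Rightarrow> ('e \<Rightarrow> real)
    \<Rightarrow> (('v,'e) gpt \<Rightarrow> 'p) \<Rightarrow> ('p \<Rightarrow> real) \<Rightarrow> real \<Rightarrow> bool" where
  "critical_value V E src tgt len emb f c \<longleftrightarrow>
     (\<exists>x\<in>gpoints V E len. f (emb x) = c \<and> critical_point src tgt len emb f x)"

definition regular_value :: "'v set \<Rightarrow> 'e set \<Rightarrow> ('e \<Rightarrow> 'v) \<Rightarrow> ('e \<Rightarrow> 'v) \<Rightarrow> ('e \<Rightarrow> real)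
    \<Rightarrow> (('v,'e) gpt \<Rightarrow> 'p) \<Rightarrow> 'p set \<Rightarrow> ('p \<Rightarrow> real) \<Rightarrow> real \<Rightarrow> bool" where
  "regular_value V E src tgt len emb Gbar f c \<longleftrightarrow>
     c \<in> f ` Gbar \<and> \<not> critical_value V E src tgt len emb f c"

end

theory Submission
  imports Defs
begin

lemma chain_nonneg: "chain_len E src tgt len x y d \<Longrightarrow> 0 \<le> d"
  by (induction rule: chain_len.induct) (auto simp: edge_step_def)

lemma chain_trans: "chain_len E src tgt len x y d1 \<Longrightarrow> chain_len E src tgt len y z d2
   \<Longrightarrow> chain_len E src tgt len x z (d1 + d2)"
proof (induction rule: chain_len.induct)
  case (refl x) then show ?case by simp
next
  case (step x y d1 z d2)
  show ?case using step chain_len.step[OF step(1) step(3)[OF step(4)]] by (simp add: add.assoc)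
qed

lemma pos_Ept: "pos src tgt len e' s = Ept e t \<Longrightarrow> e' = e \<and> s = t \<and> 0 < s \<and> s < len e'"
  by (auto simp: pos_def split: if_splits)

lemma chain_local:
  "chain_len E src tgt len x z d \<Longrightarrow> x = Ept e s \<Longrightarrow> 0 < s \<Longrightarrow> s < len e \<Longrightarrow> d < s
   \<Longrightarrow> d < len e - s \<Longrightarrow> \<exists>s'. z = Ept e s' \<and> \<bar>s' - s\<bar> \<le> d"
proof (induction arbitrary: s rule: chain_len.induct)
  case (refl x) then show ?case by auto
next
  case (step x y d1 z d2)
  from step(1) obtain e' s1 t1 where e': "e' \<in> E" "0 \<le> s1" "s1 \<le> len e'" "0 \<le> t1" "t1 \<le> len e'"
    "pos src tgt len e' s1 = x" "pos src tgt len e' t1 = y" "d1 = \<bar>s1 - t1\<bar>"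
    unfolding edge_step_def by blast
  from pos_Ept[of src tgt len e' s1 e s] e' step.prems have ee: "e' = e" "s1 = s" by auto
  have d2: "0 \<le> d2" using chain_nonneg[OF step(2)] .
  have t1: "0 < t1" "t1 < len e" using step.prems e' ee d2 by auto
  then have y: "y = Ept e t1" using e' ee by (auto simp: pos_def)
  have "\<exists>s'. z = Ept e s' \<and> \<bar>s' - t1\<bar> \<le> d2"
    using step.IH[OF y t1] step.prems e' ee d2 by auto
  then show ?case using e' ee by auto
qed

lemma pos_0: "pos src tgt len e 0 = Vtx (src e)"
  by (simp add: pos_def)

lemma pos_len: "len e > 0 \<Longrightarrow> pos src tgt len e (len e) = Vtx (tgt e)"
  by (simp add: pos_def)

lemma pos_in: "0 < t \<Longrightarrow> t < len e \<Longrightarrow> pos src tgt len e t = Ept e t"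
  by (simp add: pos_def)

lemma chain_one: "edge_step E src tgt len x y d \<Longrightarrow> chain_len E src tgt len x y d"
  using chain_len.step[OF _ chain_len.refl] by fastforce

lemma chain_to_vertex:
  assumes graph: "metric_graph V E src tgt len" and x: "x \<in> gpoints V E len"
  shows "\<exists>v\<in>V. \<exists>d d'. chain_len E src tgt len x (Vtx v) d \<and> chain_len E src tgt len (Vtx v) x d'"
proof -
  from x consider (v) v where "v \<in> V" "x = Vtx v"
    | (e) e t where "e \<in> E" "0 < t" "t < len e" "x = Ept e t"
    unfolding gpoints_def by blast
  then show ?thesis
  proof cases
    case v then show ?thesis by (meson chain_len.refl)
  next
    case e
    have sv: "src e \<in> V" using graph e unfolding metric_graph_def by blast
    have "edge_step E src tgt len x (Vtx (src e)) t"
      unfolding edge_step_def using e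
      by (intro bexI[of _ e] exI[of _ t] exI[of _ 0]) (auto simp: pos_0 pos_in)
    moreover have "edge_step E src tgt len (Vtx (src e)) x t"
      unfolding edge_step_def using e
      by (intro bexI[of _ e] exI[of _ 0] exI[of _ t]) (auto simp: pos_0 pos_in)
    ultimately show ?thesis using sv chain_one by blast
  qed
qed

lemma chain_vv:
  assumes graph: "metric_graph V E src tgt len"
    and "(u, w) \<in> ({(src e, tgt e) | e. e \<in> E} \<union> {(tgt e, src e) | e. e \<in> E})\<^sup>*"
  shows "\<exists>d. chain_len E src tgt len (Vtx u) (Vtx w) d"
  using assms(2)
proof (induction rule: rtrancl_induct)
  case base then show ?case by (meson chain_len.refl)
next
  case (step y z)
  then obtain d where d: "chain_len E src tgt len (Vtx u) (Vtx y) d" by blast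
  from step(2) obtain e where e: "e \<in> E" "(y = src e \<and> z = tgt e) \<or> (y = tgt e \<and> z = src e)" by blast
  have lp: "len e > 0" using graph e unfolding metric_graph_def by blast
  have "edge_step E src tgt len (Vtx y) (Vtx z) (len e)"
  proof (cases "y = src e \<and> z = tgt e")
    case True then show ?thesis
      unfolding edge_step_def using e lp
      by (intro bexI[of _ e] exI[of _ 0] exI[of _ "len e"]) (auto simp: pos_0 pos_len)
  next
    case False then have "y = tgt e \<and> z = src e" using e by blast
    then show ?thesis
      unfolding edge_step_def using e lp
      by (intro bexI[of _ e] exI[of _ "len e"] exI[of _ 0]) (auto simp: pos_0 pos_len)
  qed
  then show ?case using chain_trans[OF d chain_one] by blast
qed

lemma chain_exists:
  assumes graph: "metric_graph V E src tgt len" and x: "x \<in> gpoints V E len" and y: "y \<in> gpoints V E len"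
  shows "\<exists>d. chain_len E src tgt len x y d"
proof -
  obtain u d1 d1' where u: "u \<in> V" "chain_len E src tgt len x (Vtx u) d1"
    using chain_to_vertex[OF graph x] by blast
  obtain w d2 d2' where w: "w \<in> V" "chain_len E src tgt len (Vtx w) y d2'"
    using chain_to_vertex[OF graph y] by blast
  obtain d where "chain_len E src tgt len (Vtx u) (Vtx w) d"
    using chain_vv[OF graph] graph u w unfolding metric_graph_def by blast
  then show ?thesis using chain_trans u w by blast
qed

lemma gdist_le:
  assumes "chain_len E src tgt len x y d"
  shows "gdist E src tgt len x y \<le> d"
  unfolding gdist_def
proof (rule cInf_lower)
  show "d \<in> {d. chain_len E src tgt len x y d}" using assms by simp
  show "bdd_below {d. chain_len E src tgt len x y d}"
    by (rule bdd_belowI[of _ 0]) (auto intro: chain_nonneg)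
qed

theorem lemma3p8:
  fixes V :: "'v set" and E :: "'e set" and src tgt :: "'e \<Rightarrow> 'v" and len :: "'e \<Rightarrow> real"
    and B :: "'v set" and emb :: "('v,'e) gpt \<Rightarrow> 'p::metric_space" and Gbar :: "'p set"
    and f :: "'p \<Rightarrow> real" and c :: real
  assumes graph: "metric_graph V E src tgt len"
    and bverts: "B \<subseteq> V" "{v\<in>V. degree E src tgt v = 1} \<subseteq> B"
    and compl: "is_completion V E src tgt len emb Gbar"
    and cpt: "compact Gbar"
    and tdisc: "totally_disconnected (bdry V E len B emb Gbar)"
    and harm: "harmonic V E src tgt len B emb Gbar f"
    and reg: "regular_value V E src tgt len emb Gbar f c"
    and nobd: "\<not> (\<exists>x\<in>bdry V E len B emb Gbar. f x = c)"
  shows "finite {x\<in>Gbar. f x = c}"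
proof -
  let ?S = "{x\<in>Gbar. f x = c}"
  let ?G = "gpoints V E len"
  have fcont: "continuous_on Gbar f" using harm by (simp add: harmonic_def)
  have "closed ?S"
    by (rule continuous_closed_preimage_constant[OF fcont compact_imp_closed[OF cpt]])
  then have cS: "compact ?S"
    using compact_Int_closed[OF cpt, of ?S] by (simp add: Int_absorb1 Int_commute)
  have iso: "x isolated_in ?S" if xS: "x \<in> ?S" for x
  proof -
    have "x \<notin> bdry V E len B emb Gbar" using nobd xS by blast
    then obtain p where p: "p \<in> ?G" "p \<notin> Vtx ` B" "x = emb p"
      using xS unfolding bdry_def by blast
    have fp: "f (emb p) = c" using xS p by simp
    have notcv: "\<not> critical_value V E src tgt len emb f c"
      using reg by (simp add: regular_value_def)
    obtain e t where e: "e \<in> E" "0 < t" "t < len e" "p = Ept e t"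
    proof -
      from p(1) consider (v) v where "p = Vtx v"
        | (ee) e t where "e \<in> E" "0 < t" "t < len e" "p = Ept e t"
        unfolding gpoints_def by blast
      then show ?thesis
      proof cases
        case v
        then have "critical_value V E src tgt len emb f c"
          unfolding critical_value_def critical_point_def using p fp by auto
        then show ?thesis using notcv by blast
      next
        case ee then show ?thesis using that by blast
      qed
    qed
    obtain a b where ab: "\<forall>s\<in>{0..len e}. f (emb (pos src tgt len e s)) = a + b * s"
      using harm e unfolding harmonic_def by blast
    have lp: "len e > 0" using e by simp
    have "slope src tgt len emb f e = b"
      using ab lp unfolding slope_def by simp
    moreover have "slope src tgt len emb f e \<noteq> 0"
    proof
      assume "slope src tgt len emb f e = 0"
      then have "critical_value V E src tgt len emb f c"
        unfolding critical_value_def critical_point_def using p fp e by (intro bexI[of _ p]) auto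
      then show False using notcv by blast
    qed
    ultimately have b0: "b \<noteq> 0" by simp
    define r where "r = min t (len e - t) / 2"
    have r0: "r > 0" using e unfolding r_def by simp
    have rt: "r < t" "r < len e - t" using e unfolding r_def by auto
    define g where "g = (\<lambda>s. emb (Ept e s))"
    let ?T = "g ` {t - r .. t + r}"
    have sub: "ball x r \<inter> emb ` ?G \<subseteq> ?T"
    proof
      fix y assume y: "y \<in> ball x r \<inter> emb ` ?G"
      then obtain q where q: "q \<in> ?G" "y = emb q" by blast
      have "gdist E src tgt len p q < r"
        using compl p q y unfolding is_completion_def by (auto simp: dist_commute)
      moreover obtain d0 where "chain_len E src tgt len p q d0"
        using chain_exists[OF graph p(1) q(1)] by blast
      ultimately obtain d where d: "chain_len E src tgt len p q d" "d < r"
        unfolding gdist_def using cInf_lessD[of "{d. chain_len E src tgt len p q d}" r] by blast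
      have "d < t" "d < len e - t" using d rt by auto
      then obtain s' where "q = Ept e s'" "\<bar>s' - t\<bar> \<le> d"
        using chain_local[OF d(1) e(4) e(2) e(3)] by blast
      then show "y \<in> ?T" using q d unfolding g_def by (intro image_eqI[of _ _ s']) auto
    qed
    have "1-lipschitz_on {t - r .. t + r} g"
    proof (rule lipschitz_onI)
      fix s1 s2 assume s: "s1 \<in> {t - r .. t + r}" "s2 \<in> {t - r .. t + r}"
      then have s': "0 < s1" "s1 < len e" "0 < s2" "s2 < len e" using rt by auto
      have g: "Ept e s1 \<in> ?G" "Ept e s2 \<in> ?G" using s' e unfolding gpoints_def by auto
      have "edge_step E src tgt len (Ept e s1) (Ept e s2) \<bar>s1 - s2\<bar>"
        unfolding edge_step_def using e s'
        by (intro bexI[of _ e] exI[of _ s1] exI[of _ s2]) (auto simp: pos_in)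
      then have "gdist E src tgt len (Ept e s1) (Ept e s2) \<le> \<bar>s1 - s2\<bar>"
        by (intro gdist_le chain_one)
      then show "dist (g s1) (g s2) \<le> 1 * dist s1 s2"
        using compl g unfolding is_completion_def g_def by (simp add: dist_real_def)
    qed simp
    then have "continuous_on {t - r .. t + r} g" by (rule lipschitz_on_continuous_on)
    then have "closed ?T" by (intro compact_imp_closed compact_continuous_image) auto
    have "\<forall>y\<in>?S. dist x y < r \<longrightarrow> y = x"
    proof (intro ballI impI)
      fix y assume yS: "y \<in> ?S" and dy: "dist x y < r"
      have "y \<in> closure (emb ` ?G)" using yS compl unfolding is_completion_def by blast
      moreover have "y \<in> ball x r" using dy by simp
      ultimately have "y \<in> closure (ball x r \<inter> emb ` ?G)"
        using open_Int_closure_subset[of "ball x r" "emb ` ?G"] by blast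
      also have "\<dots> \<subseteq> ?T" using sub \<open>closed ?T\<close> by (simp add: closure_minimal)
      finally obtain s where s: "s \<in> {t - r .. t + r}" "y = g s" by blast
      then have s': "0 < s" "s < len e" using rt by auto
      have "f y = a + b * s" using ab[rule_format, of s] s s' unfolding g_def by (auto simp: pos_in)
      moreover have "f x = a + b * t" using ab[rule_format, of t] p e by (auto simp: pos_in)
      moreover have "f y = c" "f x = c" using yS xS by auto
      ultimately have "b * s = b * t" by linarith
      then have "s = t" using b0 by simp
      then show "y = x" using s p e unfolding g_def by simp
    qed
    then show ?thesis using xS r0 unfolding isolated_in_dist_Ex_iff by blast
  qed
  have "discrete ?S" using iso by (simp add: discrete_def)
  then show ?thesis using cS discrete_compact_finite_iff by blast
qed

end
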